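(* Let $\mathcal G$ be the planar Galilean conformal algebra with basis $\{L_n,H_n,I_n,J_n: n\in\mathbb Z\}$ and brackets $[L_n,L_m]=(m-n)L_{m+n}$, $[L_n,H_m]=mH_{m+n}$, $[L_n,I_m]=(m-n)I_{m+n}$, $[L_n,J_m]=(m-n)J_{m+n}$, $[H_n,I_m]=I_{m+n}$, $[H_n,J_m]=-J_{m+n}$, $[H_n,H_m]=[I_n,I_m]=[J_n,J_m]=[I_n,J_m]=0$. Let $\mathfrak p=\mathrm{Span}\{H_n,I_n,J_n: n\in\mathbb Z\}$, and let $\phi:\mathfrak p\to\mathbb C$ be a Lie algebra homomorphism such that $S^\phi=\{n\in\mathbb Z:\phi(H_n)\neq0\}$ is finite. Then $W(\phi)$ is irreducible if and only if $|S^\phi|\ge 2$.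
   Context: A Lie algebra homomorphism $\phi:\mathfrak p\to\mathbb C$ is a linear map vanishing on $[\mathfrak p,\mathfrak p]=\mathrm{Span}\{I_n,J_n\}$. $W(\phi)=\mathcal U(\mathcal G)\otimes_{\mathcal U(\mathfrak p)}\mathbb C w_\phi$, where $\mathbb C w_\phi$ is the one-dimensional $\mathfrak p$-module with $pw_\phi=\phi(p)w_\phi$. *)

theory Defs
  imports Complex_Main "HOL-Library.Poly_Mapping"
begin

datatype gb = L int | H int | I int | J int

text \<open>The Lie algebra G itself: finitely supported complex combinations of basis elements.\<close>
type_synonym gca = "gb \<Rightarrow>\<^sub>0 complex"

definition bvec :: "complex \<Rightarrow> gb \<Rightarrow> gca" where
  "bvec c b = Poly_Mapping.single b c"

fun br :: "gb \<Rightarrow> gb \<Rightarrow> gca" where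
  "br (L n) (L m) = bvec (of_int (m - n)) (L (m + n))"
| "br (L n) (H m) = bvec (of_int m) (H (m + n))"
| "br (H m) (L n) = bvec (- of_int m) (H (m + n))"
| "br (L n) (I m) = bvec (of_int (m - n)) (I (m + n))"
| "br (I m) (L n) = bvec (- of_int (m - n)) (I (m + n))"
| "br (L n) (J m) = bvec (of_int (m - n)) (J (m + n))"
| "br (J m) (L n) = bvec (- of_int (m - n)) (J (m + n))"
| "br (H n) (I m) = bvec 1 (I (m + n))"
| "br (I m) (H n) = bvec (- 1) (I (m + n))"
| "br (H n) (J m) = bvec (- 1) (J (m + n))"
| "br (J m) (H n) = bvec 1 (J (m + n))"
| "br (H n) (H m) = 0"
| "br (I n) (I m) = 0"
| "br (J n) (J m) = 0"
| "br (I n) (J m) = 0"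
| "br (J m) (I n) = 0"

fun in_p :: "gb \<Rightarrow> bool" where
  "in_p (L n) = False"
| "in_p (H n) = True"
| "in_p (I n) = True"
| "in_p (J n) = True"

definition lin :: "(gb \<Rightarrow> complex) \<Rightarrow> gca \<Rightarrow> complex" where
  "lin phi g = (\<Sum>k\<in>Poly_Mapping.keys g. Poly_Mapping.lookup g k * phi k)"

text \<open>A linear map phi : p -> C (given by its values on the basis H_n, I_n, J_n;
  values on L_n are irrelevant) is a Lie algebra homomorphism iff
  phi([x,y]) = 0 for all x, y in p (it suffices to check basis elements).\<close>
definition lie_hom_p :: "(gb \<Rightarrow> complex) \<Rightarrow> bool" where
  "lie_hom_p phi \<longleftrightarrow> (\<forall>x y. in_p x \<and> in_p y \<longrightarrow> lin phi (br x y) = 0)"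

definition S_phi :: "(gb \<Rightarrow> complex) \<Rightarrow> int set" where
  "S_phi phi = {n. phi (H n) \<noteq> 0}"

text \<open>Tensor algebra T(G): finitely supported complex combinations of words in the basis.\<close>
type_synonym tens = "gb list \<Rightarrow>\<^sub>0 complex"

definition wd :: "gb list \<Rightarrow> tens" where
  "wd u = Poly_Mapping.single u 1"

definition smul :: "complex \<Rightarrow> tens \<Rightarrow> tens" where
  "smul c t = Poly_Mapping.map ((*) c) t"

definition ins :: "gb list \<Rightarrow> gca \<Rightarrow> gb list \<Rightarrow> tens" where
  "ins u g v = (\<Sum>k\<in>Poly_Mapping.keys g. smul (Poly_Mapping.lookup g k) (wd (u @ [k] @ v)))"

definition act :: "gca \<Rightarrow> tens \<Rightarrow> tens" where
  "act g t = (\<Sum>k\<in>Poly_Mapping.keys t. smul (Poly_Mapping.lookup t k) (ins [] g k))"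

definition subspace_T :: "tens set \<Rightarrow> bool" where
  "subspace_T M \<longleftrightarrow> 0 \<in> M \<and> (\<forall>a\<in>M. \<forall>b\<in>M. a + b \<in> M) \<and> (\<forall>c. \<forall>a\<in>M. smul c a \<in> M)"

text \<open>Spanning set of the kernel K of T(G) -> W(phi) = U(G) (x)_{U(p)} C w_phi:
  K = two-sided ideal generated by xy - yx - [x,y]  +  left ideal generated by p - phi(p).\<close>
definition Wrels :: "(gb \<Rightarrow> complex) \<Rightarrow> tens set" where
  "Wrels phi =
     {wd (u @ [x, y] @ v) - wd (u @ [y, x] @ v) - ins u (br x y) v | u v x y. True}
   \<union> {wd (u @ [p]) - smul (phi p) (wd u) | u p. in_p p}"

definition Wker :: "(gb \<Rightarrow> complex) \<Rightarrow> tens set" where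
  "Wker phi = \<Inter> {M. subspace_T M \<and> Wrels phi \<subseteq> M}"

text \<open>W(phi) = T(G)/Wker phi with G acting by left multiplication.  G-submodules of
  W(phi) correspond exactly to subspaces M of T(G) with Wker phi \<subseteq> M that are
  stable under the action; the zero submodule is M = Wker phi and the whole module
  is M = UNIV.\<close>
definition W_irreducible :: "(gb \<Rightarrow> complex) \<Rightarrow> bool" where
  "W_irreducible phi \<longleftrightarrow>
     Wker phi \<noteq> UNIV \<and>
     (\<forall>M. subspace_T M \<and> Wker phi \<subseteq> M \<and> (\<forall>g. \<forall>t\<in>M. act g t \<in> M)
          \<longrightarrow> M = Wker phi \<or> M = UNIV)"

end

theory Submission
  imports Defs
begin


abbreviation lk :: "('a \<Rightarrow>\<^sub>0 'b::zero) \<Rightarrow> 'a \<Rightarrow> 'b" where "lk \<equiv> Poly_Mapping.lookup"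
abbreviation ks :: "('a \<Rightarrow>\<^sub>0 'b::zero) \<Rightarrow> 'a set" where "ks \<equiv> Poly_Mapping.keys"
abbreviation sg :: "'a \<Rightarrow> 'b \<Rightarrow> ('a \<Rightarrow>\<^sub>0 'b::zero)" where "sg \<equiv> Poly_Mapping.single"

lemma in_ks: "k \<in> ks p \<longleftrightarrow> lk p k \<noteq> 0"
  by (simp add: in_keys_iff)

lemma lk_sg: "lk (sg a c) k = (if k = a then c else 0)"
  by (simp add: lookup_single)

lemma ks_sg: "ks (sg a c) = (if c = 0 then {} else {a})"
  by simp

lemma lk_smul [simp]: "lk (smul c t) k = c * lk t k"
  unfolding smul_def by transfer (simp add: when_def)

lemma ks_smul: "ks (smul c t) \<subseteq> ks t"
  by (auto simp: in_ks)

lemma pm_expand: "p = (\<Sum>k\<in>ks p. sg k (lk p k))"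
  by (rule poly_mapping_eqI) (auto simp: lookup_sum lk_sg in_ks)

lemma sum_keys_superset:
  fixes h :: "'k \<Rightarrow> 'b::zero \<Rightarrow> 'c::comm_monoid_add"
  assumes "finite K" "ks p \<subseteq> K" "\<And>k. h k 0 = 0"
  shows "(\<Sum>k\<in>ks p. h k (lk p k)) = (\<Sum>k\<in>K. h k (lk p k))"
  by (rule sum.mono_neutral_left) (use assms in \<open>auto simp: in_ks\<close>)

lemma keysum_add:
  fixes h :: "'k \<Rightarrow> 'b::monoid_add \<Rightarrow> 'c::comm_monoid_add"
  assumes "\<And>k a b. h k (a + b) = h k a + h k b" "\<And>k. h k 0 = 0"
  shows "(\<Sum>k\<in>ks (p + q). h k (lk (p + q) k)) = (\<Sum>k\<in>ks p. h k (lk p k)) + (\<Sum>k\<in>ks q. h k (lk q k))"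
proof -
  let ?K = "ks p \<union> ks q"
  have "(\<Sum>k\<in>ks (p + q). h k (lk (p + q) k)) = (\<Sum>k\<in>?K. h k (lk (p + q) k))"
    by (rule sum_keys_superset) (use assms keys_add[of p q] in auto)
  also have "\<dots> = (\<Sum>k\<in>?K. h k (lk p k)) + (\<Sum>k\<in>?K. h k (lk q k))"
    by (simp add: lookup_add assms sum.distrib)
  also have "\<dots> = (\<Sum>k\<in>ks p. h k (lk p k)) + (\<Sum>k\<in>ks q. h k (lk q k))"
    using sum_keys_superset[of ?K p h] sum_keys_superset[of ?K q h] assms by auto
  finally show ?thesis .
qed

lemma keysum_single:
  fixes h :: "'k \<Rightarrow> 'b::zero \<Rightarrow> 'c::comm_monoid_add"
  assumes "\<And>k. h k 0 = 0"
  shows "(\<Sum>k\<in>ks (sg a c). h k (lk (sg a c) k)) = h a c"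
  using assms by (auto simp: lk_sg)

lemma keysum_zero: "(\<Sum>k\<in>ks (0::'a \<Rightarrow>\<^sub>0 'b::zero). h k (lk 0 k)) = 0"
  by simp

section \<open>tensors\<close>

lemma smul_add: "smul c (a + b) = smul c a + smul c b"
  by (rule poly_mapping_eqI) (simp add: lookup_add algebra_simps)
lemma smul_add2: "smul (c + d) a = smul c a + smul d a"
  by (rule poly_mapping_eqI) (simp add: lookup_add algebra_simps)
lemma smul_zero [simp]: "smul c 0 = 0"
  by (rule poly_mapping_eqI) simp
lemma smul_zero2 [simp]: "smul 0 a = 0"
  by (rule poly_mapping_eqI) simp
lemma smul_one [simp]: "smul 1 a = a"
  by (rule poly_mapping_eqI) simp
lemma smul_smul [simp]: "smul c (smul d a) = smul (c * d) a"
  by (rule poly_mapping_eqI) simp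
lemma smul_minus1: "smul (-1) a = - a"
  by (rule poly_mapping_eqI) simp
lemma smul_diff: "smul c (a - b) = smul c a - smul c b"
  by (rule poly_mapping_eqI) (simp add: lookup_minus algebra_simps)
lemma smul_uminus: "smul c (- a) = - smul c a"
  by (rule poly_mapping_eqI) simp
lemma smul_sum: "smul c (sum f A) = (\<Sum>x\<in>A. smul c (f x))"
  by (rule poly_mapping_eqI) (simp add: lookup_sum sum_distrib_left)
lemma smul_sg: "smul c (sg a d) = sg a (c * d)"
  by (rule poly_mapping_eqI) (simp add: lk_sg)

lemma wd_smul: "smul c (wd u) = sg u c"
  by (simp add: wd_def smul_sg)

lemma tens_expand: "(t::tens) = (\<Sum>u\<in>ks t. smul (lk t u) (wd u))"
  by (subst pm_expand) (simp add: wd_smul)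

lemma ins_bvec: "ins u (bvec c b) v = smul c (wd (u @ [b] @ v))"
  unfolding ins_def bvec_def
  by (rule keysum_single[where h = "\<lambda>k c. smul c (wd (u @ [k] @ v))"]) simp

lemma ins_zero [simp]: "ins u 0 v = 0"
  unfolding ins_def by simp

definition pre :: "gb \<Rightarrow> tens \<Rightarrow> tens" where
  "pre x t = act (bvec 1 x) t"

lemma pre_eq: "pre x t = (\<Sum>u\<in>ks t. smul (lk t u) (wd (x # u)))"
  unfolding pre_def act_def by (simp add: ins_bvec)

lemma pre_add: "pre x (a + b) = pre x a + pre x b"
  unfolding pre_eq by (rule keysum_add) (auto simp: smul_add2)

lemma pre_zero [simp]: "pre x 0 = 0"
  unfolding pre_eq by simp

lemma pre_smul: "pre x (smul c a) = smul c (pre x a)"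
proof (cases "c = 0")
  case True then show ?thesis by simp
next
  case False
  have k: "ks (smul c a) = ks a" using False by (auto simp: in_ks)
  show ?thesis unfolding pre_eq k by (simp add: smul_sum)
qed

lemma pre_uminus: "pre x (- a) = - pre x a"
  by (metis pre_smul smul_minus1)

lemma pre_diff: "pre x (a - b) = pre x a - pre x b"
  by (metis diff_conv_add_uminus pre_add pre_uminus)

lemma pre_sum: "pre x (sum f A) = (\<Sum>i\<in>A. pre x (f i))"
  by (induction A rule: infinite_finite_induct) (auto simp: pre_add)

lemma pre_wd [simp]: "pre x (wd u) = wd (x # u)"
  unfolding pre_eq by (simp add: wd_def)

lemma pre_ins: "pre x (ins u g v) = ins (x # u) g v"
  unfolding ins_def by (simp add: pre_sum pre_smul)

lemma subspace_T_diff: "subspace_T M \<Longrightarrow> a \<in> M \<Longrightarrow> b \<in> M \<Longrightarrow> a - b \<in> M"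
  unfolding subspace_T_def by (metis diff_conv_add_uminus smul_minus1)

lemma subspace_T_sum: "subspace_T M \<Longrightarrow> (\<And>i. i \<in> A \<Longrightarrow> f i \<in> M) \<Longrightarrow> sum f A \<in> M"
  by (induction A rule: infinite_finite_induct) (auto simp: subspace_T_def)

lemma subspace_T_Int: "(\<And>M. M \<in> MM \<Longrightarrow> subspace_T M) \<Longrightarrow> subspace_T (\<Inter>MM)"
  unfolding subspace_T_def by blast

lemma Wker_subspace: "subspace_T (Wker phi)"
  unfolding Wker_def by (rule subspace_T_Int) auto

lemma Wrels_Wker: "Wrels phi \<subseteq> Wker phi"
  unfolding Wker_def by auto

lemma Wker_least: "subspace_T M \<Longrightarrow> Wrels phi \<subseteq> M \<Longrightarrow> Wker phi \<subseteq> M"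
  unfolding Wker_def by auto

lemma Wker_0: "0 \<in> Wker phi" using Wker_subspace unfolding subspace_T_def by blast
lemma Wker_add: "a \<in> Wker phi \<Longrightarrow> b \<in> Wker phi \<Longrightarrow> a + b \<in> Wker phi"
  using Wker_subspace unfolding subspace_T_def by blast
lemma Wker_smul: "a \<in> Wker phi \<Longrightarrow> smul c a \<in> Wker phi"
  using Wker_subspace unfolding subspace_T_def by blast
lemma Wker_diff: "a \<in> Wker phi \<Longrightarrow> b \<in> Wker phi \<Longrightarrow> a - b \<in> Wker phi"
  using Wker_subspace subspace_T_diff by blast
lemma Wker_uminus: "a \<in> Wker phi \<Longrightarrow> - a \<in> Wker phi"
  by (metis Wker_smul smul_minus1)
lemma Wker_sum: "(\<And>i. i \<in> A \<Longrightarrow> f i \<in> Wker phi) \<Longrightarrow> sum f A \<in> Wker phi"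
  using Wker_subspace subspace_T_sum by blast

lemma rel1: "wd (u @ [x, y] @ v) - wd (u @ [y, x] @ v) - ins u (br x y) v \<in> Wker phi"
  using Wrels_Wker unfolding Wrels_def by blast

lemma rel2: "in_p p \<Longrightarrow> wd (u @ [p]) - smul (phi p) (wd u) \<in> Wker phi"
  using Wrels_Wker unfolding Wrels_def by blast

lemma Wker_pre: "t \<in> Wker phi \<Longrightarrow> pre x t \<in> Wker phi"
proof -
  let ?M = "{t. pre x t \<in> Wker phi}"
  have "subspace_T ?M"
    unfolding subspace_T_def by (auto simp: Wker_0 pre_add pre_smul intro: Wker_add Wker_smul)
  moreover have "Wrels phi \<subseteq> ?M"
  proof
    fix r assume "r \<in> Wrels phi"
    then show "r \<in> ?M"
      unfolding Wrels_def
    proof (elim UnE CollectE exE conjE)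
      fix u v a b assume r: "r = wd (u @ [a, b] @ v) - wd (u @ [b, a] @ v) - ins u (br a b) v"
      show "r \<in> ?M" using rel1[of "x # u" a b v phi] by (simp add: r pre_diff pre_ins)
    next
      fix u p assume r: "r = wd (u @ [p]) - smul (phi p) (wd u)" and "in_p p"
      show "r \<in> ?M" using rel2[OF \<open>in_p p\<close>, of "x # u" phi] by (simp add: r pre_diff pre_smul)
    qed
  qed
  ultimately show "t \<in> Wker phi \<Longrightarrow> pre x t \<in> Wker phi" using Wker_least by blast
qed


fun isL :: "gb \<Rightarrow> bool" where
  "isL (L n) = True" | "isL (H n) = False" | "isL (I n) = False" | "isL (J n) = False"

lemma in_p_isL: "in_p x \<longleftrightarrow> \<not> isL x"
  by (cases x) auto

fun idx :: "gb \<Rightarrow> int" where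
  "idx (L n) = n" | "idx (H n) = n" | "idx (I n) = n" | "idx (J n) = n"

definition gtb :: "gb \<Rightarrow> gb \<Rightarrow> bool" where
  "gtb x y \<longleftrightarrow> (in_p x \<and> isL y) \<or> (isL x \<and> isL y \<and> idx x > idx y)"

lemma gtb_asym: "gtb x y \<Longrightarrow> \<not> gtb y x"
  unfolding gtb_def by (auto simp: in_p_isL)

fun inv :: "gb list \<Rightarrow> nat" where
  "inv [] = 0" | "inv (x # u) = length (filter (gtb x) u) + inv u"

lemma inv_swap: "gtb x y \<Longrightarrow> inv (a @ [y, x] @ b) < inv (a @ [x, y] @ b)"
proof (induction a)
  case Nil
  then show ?case using gtb_asym[OF Nil] by simp
next
  case (Cons c a)
  have "length (filter (gtb c) (a @ [y, x] @ b)) = length (filter (gtb c) (a @ [x, y] @ b))"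
    by simp
  then show ?case using Cons by simp
qed

definition sortedL :: "gb list \<Rightarrow> bool" where
  "sortedL u \<longleftrightarrow> (\<exists>ns. sorted ns \<and> u = map L ns)"

definition SPz :: "int \<Rightarrow> tens set" where
  "SPz d = {s. \<forall>u\<in>ks s. sortedL u \<and> int (length u) \<le> d}"

definition Fz :: "(gb \<Rightarrow> complex) \<Rightarrow> int \<Rightarrow> tens set" where
  "Fz phi d = {t. \<exists>s\<in>SPz d. t - s \<in> Wker phi}"

lemma SPz_0 [simp]: "0 \<in> SPz d" by (simp add: SPz_def)
lemma SPz_add: "a \<in> SPz d \<Longrightarrow> b \<in> SPz d \<Longrightarrow> a + b \<in> SPz d"
  unfolding SPz_def using keys_add[of a b] by blast
lemma SPz_smul: "a \<in> SPz d \<Longrightarrow> smul c a \<in> SPz d"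
  unfolding SPz_def using ks_smul by blast
lemma SPz_mono: "a \<in> SPz d \<Longrightarrow> d \<le> d' \<Longrightarrow> a \<in> SPz d'"
  unfolding SPz_def by force
lemma SPz_neg: "d < 0 \<Longrightarrow> a \<in> SPz d \<Longrightarrow> a = 0"
proof -
  assume d: "d < 0" and a: "a \<in> SPz d"
  have "ks a = {}"
  proof (rule ccontr)
    assume "ks a \<noteq> {}"
    then obtain u where "u \<in> ks a" by blast
    with a have "int (length u) \<le> d" unfolding SPz_def by blast
    with d show False by simp
  qed
  then show ?thesis by simp
qed

lemma Fz_Wker: "w \<in> Wker phi \<Longrightarrow> w \<in> Fz phi d"
  unfolding Fz_def mem_Collect_eq by (rule bexI[of _ 0]) auto

lemma Fz_0 [simp]: "0 \<in> Fz phi d" by (simp add: Fz_Wker Wker_0)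

lemma Fz_add: "a \<in> Fz phi d \<Longrightarrow> b \<in> Fz phi d \<Longrightarrow> a + b \<in> Fz phi d"
proof -
  assume "a \<in> Fz phi d" "b \<in> Fz phi d"
  then obtain s s' where "s \<in> SPz d" "a - s \<in> Wker phi" "s' \<in> SPz d" "b - s' \<in> Wker phi"
    unfolding Fz_def by blast
  note h = this
  have eq: "(a + b) - (s + s') = (a - s) + (b - s')" by (simp add: algebra_simps)
  have "(a + b) - (s + s') \<in> Wker phi" unfolding eq using h by (simp add: Wker_add)
  then show ?thesis unfolding Fz_def mem_Collect_eq using h
    by (intro bexI[of _ "s + s'"]) (auto simp: SPz_add)
qed

lemma Fz_smul: "a \<in> Fz phi d \<Longrightarrow> smul c a \<in> Fz phi d"
proof -
  assume "a \<in> Fz phi d"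
  then obtain s where "s \<in> SPz d" "a - s \<in> Wker phi" unfolding Fz_def by blast
  then show ?thesis unfolding Fz_def mem_Collect_eq
    by (intro bexI[of _ "smul c s"]) (auto simp: SPz_smul smul_diff[symmetric] Wker_smul)
qed

lemma Fz_uminus: "a \<in> Fz phi d \<Longrightarrow> - a \<in> Fz phi d"
  by (metis Fz_smul smul_minus1)

lemma Fz_diff: "a \<in> Fz phi d \<Longrightarrow> b \<in> Fz phi d \<Longrightarrow> a - b \<in> Fz phi d"
  by (metis Fz_add Fz_uminus diff_conv_add_uminus)

lemma Fz_sum: "(\<And>i. i \<in> A \<Longrightarrow> f i \<in> Fz phi d) \<Longrightarrow> sum f A \<in> Fz phi d"
  by (induction A rule: infinite_finite_induct) (auto simp: Fz_add)

lemma Fz_mono: "a \<in> Fz phi d \<Longrightarrow> d \<le> d' \<Longrightarrow> a \<in> Fz phi d'"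
  unfolding Fz_def using SPz_mono by blast

lemma Fz_equiv: "a \<in> Fz phi d \<Longrightarrow> b - a \<in> Wker phi \<Longrightarrow> b \<in> Fz phi d"
  by (metis Fz_Wker Fz_add diff_add_cancel)

lemma Fz_neg: "d < 0 \<Longrightarrow> a \<in> Fz phi d \<Longrightarrow> a \<in> Wker phi"
  unfolding Fz_def using SPz_neg by fastforce

lemma SPz_Fz: "s \<in> SPz d \<Longrightarrow> s \<in> Fz phi d"
  unfolding Fz_def mem_Collect_eq by (intro bexI[of _ s]) (auto simp: Wker_0)

lemma wd_sorted_Fz: "sortedL u \<Longrightarrow> int (length u) \<le> d \<Longrightarrow> wd u \<in> Fz phi d"
  by (rule SPz_Fz) (simp add: SPz_def wd_def)

lemma noinv_sorted:
  assumes "\<not> (\<exists>a x y b. u = a @ [x, y] @ b \<and> gtb x y)"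
    and "\<not> (\<exists>u' p. u = u' @ [p] \<and> in_p p)"
  shows "\<exists>ns. sorted ns \<and> u = map L ns"
  using assms
proof (induction u)
  case Nil
  then show ?case by auto
next
  case (Cons x u)
  note prems = Cons.prems and IH = Cons.IH
  have h1: "\<not> (\<exists>a x y b. u = a @ [x, y] @ b \<and> gtb x y)"
    using prems(1) by (metis append_Cons)
  show ?case
  proof (cases u)
    case Nil
    then have "isL x" using prems(2) in_p_isL by force
    then obtain m where "x = L m" by (cases x) auto
    then show ?thesis using Nil by (intro exI[of _ "[m]"]) auto
  next
    case uy: (Cons y u2)
    have h2: "\<not> (\<exists>u' p. u = u' @ [p] \<and> in_p p)"
      using prems(2) by (metis append_Cons)
    obtain ns where ns: "sorted ns" "u = map L ns" using IH[OF h1 h2] by blast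
    with uy obtain n ns2 where ns2: "ns = n # ns2" "y = L n" by (cases ns) auto
    have ng: "\<not> gtb x y" using prems(1) uy by (metis append_Nil append_Cons)
    then obtain m where xm: "x = L m" unfolding gtb_def using ns2 by (cases x) auto
    with ng ns2 have "m \<le> n" unfolding gtb_def by auto
    then have "sorted (m # ns)" using ns ns2 by auto
    then show ?thesis using xm ns by (intro exI[of _ "m # ns"]) auto
  qed
qed

lemma ins_Fz:
  assumes "\<And>k. wd (a @ [k] @ b) \<in> Fz phi d"
  shows "ins a g b \<in> Fz phi d"
  unfolding ins_def using assms by (auto intro!: Fz_sum Fz_smul)

lemma straight_aux:
  "\<forall>u. length u = l \<longrightarrow> wd u \<in> Fz phi (int l) \<and> ((\<exists>x\<in>set u. in_p x) \<longrightarrow> wd u \<in> Fz phi (int l - 1))"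
proof (induction l rule: less_induct)
  case (less l)
  note IHl = less.IH
  have "\<forall>u. length u = l \<and> inv u = k \<longrightarrow> wd u \<in> Fz phi (int l) \<and> ((\<exists>x\<in>set u. in_p x) \<longrightarrow> wd u \<in> Fz phi (int l - 1))" for k
  proof (induction k rule: less_induct)
    case (less k)
    show ?case
    proof (intro allI impI, elim conjE)
      fix u assume lu: "length u = l" and ku: "inv u = k"
      show "wd u \<in> Fz phi (int l) \<and> ((\<exists>x\<in>set u. in_p x) \<longrightarrow> wd u \<in> Fz phi (int l - 1))"
      proof (cases "\<exists>u' p. u = u' @ [p] \<and> in_p p")
        case True
        then obtain u' p where u: "u = u' @ [p]" "in_p p" by blast
        have "length u' < l" using lu u by simp
        then have "wd u' \<in> Fz phi (int l - 1)" using IHl[of "length u'"] lu u by auto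
        then have "smul (phi p) (wd u') \<in> Fz phi (int l - 1)" by (rule Fz_smul)
        then have "wd u \<in> Fz phi (int l - 1)" using rel2[OF u(2), of u' phi] u by (auto intro: Fz_equiv)
        then show ?thesis using Fz_mono by fastforce
      next
        case False
        note nop = False
        show ?thesis
        proof (cases "\<exists>a x y b. u = a @ [x, y] @ b \<and> gtb x y")
          case True
          then obtain a x y b where u: "u = a @ [x, y] @ b" "gtb x y" by blast
          let ?u' = "a @ [y, x] @ b"
          have "inv ?u' < k" using inv_swap[OF u(2), of a b] ku u by simp
          moreover have "length ?u' = l" using lu u by simp
          ultimately have IH: "wd ?u' \<in> Fz phi (int l) \<and> ((\<exists>x\<in>set ?u'. in_p x) \<longrightarrow> wd ?u' \<in> Fz phi (int l - 1))"
            using less.IH by blast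
          have "length (a @ [k] @ b) < l" for k using lu u by simp
          then have wk: "wd (a @ [k] @ b) \<in> Fz phi (int l - 1)" for k
            using IHl[of "length (a @ [k] @ b)"] lu u by auto
          have insF: "ins a (br x y) b \<in> Fz phi (int l - 1)" by (rule ins_Fz[OF wk])
          have r: "wd u - (wd ?u' + ins a (br x y) b) \<in> Wker phi"
            using rel1[of a x y b phi] u by (simp add: algebra_simps)
          have s1: "wd u \<in> Fz phi (int l)"
            proof -
            have "wd ?u' + ins a (br x y) b \<in> Fz phi (int l)"
              using IH Fz_mono[OF insF, of "int l"] by (auto intro: Fz_add)
            then show ?thesis using r by (rule Fz_equiv)
          qed
          have s2: "(\<exists>x\<in>set u. in_p x) \<longrightarrow> wd u \<in> Fz phi (int l - 1)"
            using IH insF r u by (auto intro: Fz_equiv Fz_add)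
          show ?thesis using s1 s2 by blast
        next
          case False
          obtain ns where ns: "sorted ns" "u = map L ns" using noinv_sorted[OF False nop] by blast
          have "wd u \<in> Fz phi (int l)" using ns lu by (intro wd_sorted_Fz) (auto simp: sortedL_def)
          moreover have "\<not> (\<exists>x\<in>set u. in_p x)" using ns by auto
          ultimately show ?thesis by blast
        qed
      qed
    qed
  qed
  then show ?case by blast
qed

lemma straight: "wd u \<in> Fz phi (int (length u))"
  using straight_aux by blast

lemma straight_p: "x \<in> set u \<Longrightarrow> in_p x \<Longrightarrow> wd u \<in> Fz phi (int (length u) - 1)"
  using straight_aux by blast

lemma tens_Fz: "\<exists>d. t \<in> Fz phi d"
proof -
  let ?d = "Max (insert 0 (int ` length ` ks t))"
  have "wd u \<in> Fz phi ?d" if "u \<in> ks t" for u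
  proof -
    have "int (length u) \<le> ?d" using that by (intro Max_ge) auto
    then show ?thesis using straight[of u phi] by (rule Fz_mono[rotated])
  qed
  then have "(\<Sum>u\<in>ks t. smul (lk t u) (wd u)) \<in> Fz phi ?d" by (auto intro!: Fz_sum Fz_smul)
  then show ?thesis using tens_expand[of t] by auto
qed

lemma pre_Fz: "t \<in> Fz phi d \<Longrightarrow> pre x t \<in> Fz phi (d + 1)"
proof -
  assume "t \<in> Fz phi d"
  then obtain s where s: "s \<in> SPz d" "t - s \<in> Wker phi" unfolding Fz_def by blast
  have "wd (x # u) \<in> Fz phi (d + 1)" if "u \<in> ks s" for u
    using straight[of "x # u" phi] s(1) that unfolding SPz_def by (force intro: Fz_mono)
  then have "pre x s \<in> Fz phi (d + 1)" unfolding pre_eq by (auto intro!: Fz_sum Fz_smul)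
  moreover have "pre x t - pre x s \<in> Wker phi" using Wker_pre[OF s(2)] by (simp add: pre_diff)
  ultimately show ?thesis by (metis Fz_equiv minus_diff_eq Wker_uminus)
qed


definition wdn :: "int list \<Rightarrow> tens" where "wdn ns = wd (map L ns)"

fun Dm :: "(gb \<Rightarrow> complex) \<Rightarrow> int \<Rightarrow> int list \<Rightarrow> tens" where
  "Dm phi m [] = 0"
| "Dm phi m (n # ns) = smul (- of_int m * phi (H (m + n))) (wdn ns) + pre (L n) (Dm phi m ns)"

lemma ins_Fz':
  assumes "\<And>k. k \<in> ks g \<Longrightarrow> wd (a @ [k] @ b) \<in> Fz phi d"
  shows "ins a g b \<in> Fz phi d"
  unfolding ins_def using assms by (auto intro!: Fz_sum Fz_smul)

lemma br_H_p: "k \<in> ks (br (H j) x) \<Longrightarrow> in_p k"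
  by (cases x) (auto simp: bvec_def split: if_splits)

lemma move_H:
  "\<forall>a. wd (a @ [H k] @ b) - smul (phi (H k)) (wd (a @ b)) \<in> Fz phi (int (length (a @ b)) - 1)"
proof (induction b)
  case Nil
  show ?case using rel2[of "H k" _ phi] by (auto intro: Fz_Wker)
next
  case (Cons x b)
  show ?case
  proof
    fix a
    have r: "wd (a @ [H k, x] @ b) - wd (a @ [x, H k] @ b) - ins a (br (H k) x) b \<in> Wker phi"
      by (rule rel1)
    have i: "ins a (br (H k) x) b \<in> Fz phi (int (length (a @ x # b)) - 1)"
    proof (rule ins_Fz')
      fix k' assume "k' \<in> ks (br (H k) x)"
      then have "in_p k'" by (rule br_H_p)
      then show "wd (a @ [k'] @ b) \<in> Fz phi (int (length (a @ x # b)) - 1)"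
        using straight_p[of k' "a @ [k'] @ b" phi] by simp
    qed
    have ih: "wd ((a @ [x]) @ [H k] @ b) - smul (phi (H k)) (wd ((a @ [x]) @ b)) \<in> Fz phi (int (length (a @ x # b)) - 1)"
      using Cons.IH[rule_format, of "a @ [x]"] by simp
    have AA: "(wd ((a @ [x]) @ [H k] @ b) - smul (phi (H k)) (wd ((a @ [x]) @ b))) + ins a (br (H k) x) b
          \<in> Fz phi (int (length (a @ x # b)) - 1)" using ih i by (rule Fz_add)
    have EQ: "(wd (a @ [H k] @ x # b) - smul (phi (H k)) (wd (a @ x # b))) -
       ((wd ((a @ [x]) @ [H k] @ b) - smul (phi (H k)) (wd ((a @ [x]) @ b))) + ins a (br (H k) x) b)
       = wd (a @ [H k, x] @ b) - wd (a @ [x, H k] @ b) - ins a (br (H k) x) b"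
      by (simp add: algebra_simps)
    show "wd (a @ [H k] @ x # b) - smul (phi (H k)) (wd (a @ x # b)) \<in> Fz phi (int (length (a @ x # b)) - 1)"
      using Fz_equiv[OF AA] EQ r by metis
  qed
qed

lemma Dm_lemma:
  "\<forall>m. pre (H m) (wdn ns) - smul (phi (H m)) (wdn ns) - Dm phi m ns \<in> Fz phi (int (length ns) - 2)"
proof (induction ns)
  case Nil
  show ?case using rel2[of "H m" "[]" phi for m] by (auto simp: wdn_def intro: Fz_Wker)
next
  case (Cons n ns)
  show ?case
  proof
    fix m
    let ?v = "map L ns"
    have r: "wd ([] @ [H m, L n] @ ?v) - wd ([] @ [L n, H m] @ ?v) - ins [] (br (H m) (L n)) ?v \<in> Wker phi"
      by (rule rel1)
    have br: "ins [] (br (H m) (L n)) ?v = smul (- of_int m) (wd (H (m + n) # ?v))"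
      by (simp add: ins_bvec)
    define e where "e = pre (H m) (wdn ns) - smul (phi (H m)) (wdn ns) - Dm phi m ns"
    have e: "e \<in> Fz phi (int (length ns) - 2)" using Cons.IH by (simp add: e_def)
    have ee: "pre (H m) (wdn ns) = smul (phi (H m)) (wdn ns) + Dm phi m ns + e"
      by (simp add: e_def)
    have e2: "pre (L n) e \<in> Fz phi (int (length (n # ns)) - 2)"
      using pre_Fz[OF e] by simp
    have mv: "wd ([] @ [H (m + n)] @ ?v) - smul (phi (H (m + n))) (wd ([] @ ?v)) \<in> Fz phi (int (length ([] @ ?v)) - 1)"
      using move_H by blast
    then have mv2: "smul (- of_int m) (wd (H (m + n) # ?v) - smul (phi (H (m + n))) (wdn ns)) \<in> Fz phi (int (length (n # ns)) - 2)"
      by (auto simp: wdn_def intro: Fz_smul)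
    have w1: "wd (L n # H m # ?v) = pre (L n) (pre (H m) (wdn ns))" by (simp add: wdn_def)
    have eq1: "wd (L n # H m # ?v) = smul (phi (H m)) (wd (L n # ?v)) + pre (L n) (Dm phi m ns) + pre (L n) e"
      unfolding w1 ee by (simp add: pre_add pre_smul wdn_def)
    have eq2: "smul (- of_int m) (wd (H (m + n) # ?v) - smul (phi (H (m + n))) (wdn ns))
       = smul (- of_int m) (wd (H (m + n) # ?v)) - smul (- of_int m * phi (H (m + n))) (wdn ns)"
      by (simp add: smul_diff)
    have eq3: "pre (H m) (wdn (n # ns)) = wd (H m # L n # ?v)" "wdn (n # ns) = wd (L n # ?v)"
      by (simp_all add: wdn_def)
    have "pre (H m) (wdn (n # ns)) - smul (phi (H m)) (wdn (n # ns)) - Dm phi m (n # ns)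
        - (pre (L n) e + smul (- of_int m) (wd (H (m + n) # ?v) - smul (phi (H (m + n))) (wdn ns)))
        = wd ([] @ [H m, L n] @ ?v) - wd ([] @ [L n, H m] @ ?v) - ins [] (br (H m) (L n)) ?v"
      unfolding br eq1 eq2 eq3 Dm.simps append.simps by (simp add: algebra_simps)
    moreover have "pre (L n) e + smul (- of_int m) (wd (H (m + n) # ?v) - smul (phi (H (m + n))) (wdn ns))
        \<in> Fz phi (int (length (n # ns)) - 2)" using e2 mv2 by (rule Fz_add)
    ultimately show "pre (H m) (wdn (n # ns)) - smul (phi (H m)) (wdn (n # ns)) - Dm phi m (n # ns)
        \<in> Fz phi (int (length (n # ns)) - 2)"
      using r Fz_equiv by metis
  qed
qed

lemma Dm_Fz: "Dm phi m ns \<in> Fz phi (int (length ns) - 1)"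
proof (induction ns)
  case Nil then show ?case by simp
next
  case (Cons n ns)
  have "smul (- of_int m * phi (H (m + n))) (wdn ns) \<in> Fz phi (int (length (n # ns)) - 1)"
    using straight[of "map L ns" phi] by (auto simp: wdn_def intro: Fz_smul)
  moreover have "pre (L n) (Dm phi m ns) \<in> Fz phi (int (length (n # ns)) - 1)"
    using pre_Fz[OF Cons.IH] by simp
  ultimately show ?case by (simp add: Fz_add)
qed

lemma sorted_head_remove1:
  "sorted (n0 # ns) \<Longrightarrow> n0 \<in> set ns \<Longrightarrow> n0 # remove1 n0 ns = ns"
  by (cases ns) auto

lemma Dm_tri:
  assumes "sorted ns" "\<And>n. n \<in> set ns \<Longrightarrow> n \<noteq> n0 \<Longrightarrow> phi (H (m + n)) = 0"
  shows "Dm phi m ns = smul (of_nat (count_list ns n0) * (- of_int m * phi (H (m + n0)))) (wdn (remove1 n0 ns))"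
  using assms
proof (induction ns)
  case Nil then show ?case by simp
next
  case (Cons n ns)
  have IH: "Dm phi m ns = smul (of_nat (count_list ns n0) * (- of_int m * phi (H (m + n0)))) (wdn (remove1 n0 ns))"
    using Cons by auto
  show ?case
  proof (cases "n = n0")
    case True
    show ?thesis
    proof (cases "n0 \<in> set ns")
      case True
      have "map L (n0 # remove1 n0 ns) = map L ns" using sorted_head_remove1[of n0 ns] Cons.prems True \<open>n = n0\<close> by simp
      then have "pre (L n) (wdn (remove1 n0 ns)) = wdn ns" by (simp add: wdn_def \<open>n = n0\<close>)
      have c: "count_list (n # ns) n0 = Suc (count_list ns n0)" using \<open>n = n0\<close> by simp
      have "Dm phi m (n # ns) = smul (- of_int m * phi (H (m + n0))) (wdn ns)
           + smul (of_nat (count_list ns n0) * (- of_int m * phi (H (m + n0)))) (wdn ns)"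
        using \<open>n = n0\<close> \<open>pre (L n) (wdn (remove1 n0 ns)) = wdn ns\<close> by (simp add: IH pre_smul)
      also have "\<dots> = smul (of_nat (count_list (n # ns) n0) * (- of_int m * phi (H (m + n0)))) (wdn ns)"
        unfolding c smul_add2[symmetric] by (simp add: algebra_simps)
      finally show ?thesis using \<open>n = n0\<close> by simp
    next
      case False
      then have "count_list ns n0 = 0" by (simp add: count_list_0_iff)
      then show ?thesis using \<open>n = n0\<close> by (simp add: IH)
    qed
  next
    case False
    then have "phi (H (m + n)) = 0" using Cons.prems by auto
    then show ?thesis using False by (simp add: IH pre_smul wdn_def)
  qed
qed

lemma tri:
  assumes fin: "finite (S_phi phi)" and c2: "card (S_phi phi) \<ge> 2"
    and fF: "finite F" and nF: "F \<noteq> {}"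
  shows "\<exists>m n0. n0 \<in> F \<and> m \<noteq> 0 \<and> phi (H (m + n0)) \<noteq> 0 \<and> (\<forall>n\<in>F. n \<noteq> n0 \<longrightarrow> phi (H (m + n)) = 0)"
proof -
  let ?S = "S_phi phi"
  have nS: "?S \<noteq> {}" using c2 by auto
  have "Min ?S < Max ?S"
  proof (rule ccontr)
    assume "\<not> Min ?S < Max ?S"
    moreover obtain z where "z \<in> ?S" using nS by blast
    moreover have "Min ?S \<le> z" "z \<le> Max ?S" using fin \<open>z \<in> ?S\<close> by auto
    ultimately have mM: "Min ?S = Max ?S" by simp
    have "?S \<subseteq> {Min ?S}"
    proof
      fix x assume "x \<in> ?S"
      then have "Min ?S \<le> x" "x \<le> Max ?S" using fin by auto
      then show "x \<in> {Min ?S}" using mM by simp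
    qed
    then have "card ?S \<le> card {Min ?S}" by (intro card_mono) auto
    then have "card ?S \<le> 1" by simp
    then show False using c2 by simp
  qed
  note mm = this
  have inS: "phi (H k) \<noteq> 0 \<longleftrightarrow> k \<in> ?S" for k by (simp add: S_phi_def)
  have leMax: "k \<in> ?S \<Longrightarrow> k \<le> Max ?S" for k using fin by simp
  have geMin: "k \<in> ?S \<Longrightarrow> Min ?S \<le> k" for k using fin by simp
  have MaxS: "Max ?S \<in> ?S" and MinS: "Min ?S \<in> ?S" using fin nS by auto
  show ?thesis
  proof (cases "Min F = Max ?S")
    case False
    show ?thesis
    proof (intro exI conjI ballI impI)
      show "Min F \<in> F" using fF nF by simp
      show "Max ?S - Min F \<noteq> 0" using False by simp
      show "phi (H (Max ?S - Min F + Min F)) \<noteq> 0" using MaxS inS by simp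
      fix n assume "n \<in> F" "n \<noteq> Min F"
      moreover have "Min F \<le> n" using fF \<open>n \<in> F\<close> by simp
      ultimately have "n > Min F" by simp
      then have "Max ?S - Min F + n \<notin> ?S" using leMax by force
      then show "phi (H (Max ?S - Min F + n)) = 0" using inS by blast
    qed
  next
    case True
    show ?thesis
    proof (intro exI conjI ballI impI)
      show "Max F \<in> F" using fF nF by simp
      have "Max F \<ge> Min F" using fF nF by simp
      then show "Min ?S - Max F \<noteq> 0" using True mm by simp
      show "phi (H (Min ?S - Max F + Max F)) \<noteq> 0" using MinS inS by simp
      fix n assume "n \<in> F" "n \<noteq> Max F"
      moreover have "n \<le> Max F" using fF \<open>n \<in> F\<close> by simp
      ultimately have "n < Max F" by simp
      then have "Min ?S - Max F + n \<notin> ?S" using geMin by force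
      then show "phi (H (Min ?S - Max F + n)) = 0" using inS by blast
    qed
  qed
qed


definition stable :: "(gb \<Rightarrow> complex) \<Rightarrow> tens set \<Rightarrow> bool" where
  "stable phi M \<longleftrightarrow> subspace_T M \<and> Wker phi \<subseteq> M \<and> (\<forall>x. \<forall>t\<in>M. pre x t \<in> M)"

lemma lk_wd [simp]: "lk (wd w) x = (if x = w then 1 else 0)"
  by (simp add: wd_def lk_sg)

lemma sortedL_eq: "sortedL u \<Longrightarrow> map L (map idx u) = u"
  unfolding sortedL_def by (auto simp: comp_def)

lemma sortedL_wdn: "sortedL u \<Longrightarrow> wdn (map idx u) = wd u"
  unfolding wdn_def using sortedL_eq by simp

lemma lk_smul_wd: "lk (smul c (wd w)) w0 = (if w0 = w then c else 0)"
  by (simp add: wd_def lk_sg)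

lemma ks_smul_wd: "ks (smul c (wd w)) \<subseteq> (if c = 0 then {} else {w})"
  by (auto simp: in_ks lk_smul_wd split: if_splits)

lemma sortedL_map: "sortedL u \<Longrightarrow> u = map L (map idx u) \<and> sorted (map idx u)"
  unfolding sortedL_def by (auto simp: comp_def)

lemma pre_minus_expand:
  "pre x s - smul c s = (\<Sum>u\<in>ks s. smul (lk s u) (pre x (wd u) - smul c (wd u)))"
proof -
  have 1: "pre x s = (\<Sum>u\<in>ks s. smul (lk s u) (pre x (wd u)))" unfolding pre_eq[of x s] by simp
  have "smul c s = smul c (\<Sum>u\<in>ks s. smul (lk s u) (wd u))"
    by (rule arg_cong[where f="smul c"]) (rule tens_expand)
  also have "\<dots> = (\<Sum>u\<in>ks s. smul c (smul (lk s u) (wd u)))" by (rule smul_sum)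
  finally have 2: "smul c s = (\<Sum>u\<in>ks s. smul c (smul (lk s u) (wd u)))" .
  show ?thesis unfolding 1 2 by (simp add: smul_diff sum_subtractf mult.commute)
qed

lemma descent:
  assumes st: "stable phi M" and fin: "finite (S_phi phi)" and c2: "card (S_phi phi) \<ge> 2"
  shows "\<forall>s. s \<in> SPz (int r) \<longrightarrow> s \<noteq> 0 \<longrightarrow> s \<in> M \<longrightarrow> wd [] \<in> M"
proof (induction r)
  have sub: "subspace_T M" and WM: "Wker phi \<subseteq> M" and preM: "\<And>x t. t \<in> M \<Longrightarrow> pre x t \<in> M"
    using st unfolding stable_def by auto
  case 0
  show ?case
  proof (intro allI impI)
    fix s assume s: "s \<in> SPz (int 0)" "s \<noteq> 0" "s \<in> M"
    have k: "ks s \<subseteq> {[]}" using s(1) unfolding SPz_def by auto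
    have e: "s = smul (lk s []) (wd [])"
    proof (rule poly_mapping_eqI)
      fix u show "lk s u = lk (smul (lk s []) (wd [])) u"
        using k by (cases "u = []") (auto simp: lk_smul_wd in_ks)
    qed
    have "lk s [] \<noteq> 0" using e s(2) by auto
    then have "wd [] = smul (1 / lk s []) s" by (subst e) simp
    moreover have "smul (1 / lk s []) s \<in> M" using s(3) sub unfolding subspace_T_def by blast
    ultimately show "wd [] \<in> M" by simp
  qed
next
  have sub: "subspace_T M" and WM: "Wker phi \<subseteq> M" and preM: "\<And>x t. t \<in> M \<Longrightarrow> pre x t \<in> M"
    using st unfolding stable_def by auto
  case (Suc r)
  show ?case
  proof (intro allI impI)
    fix s assume s: "s \<in> SPz (int (Suc r))" "s \<noteq> 0" "s \<in> M"
    show "wd [] \<in> M"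
    proof (cases "s \<in> SPz (int r)")
      case True then show ?thesis using Suc.IH s by blast
    next
      case False
      have sk: "\<And>u. u \<in> ks s \<Longrightarrow> sortedL u \<and> length u \<le> Suc r" using s(1) unfolding SPz_def by auto
      define T where "T = {u \<in> ks s. length u = Suc r}"
      have Tne: "T \<noteq> {}"
      proof
        assume "T = {}"
        then have "\<And>u. u \<in> ks s \<Longrightarrow> length u \<le> r" using sk unfolding T_def by fastforce
        then have "s \<in> SPz (int r)" using sk unfolding SPz_def by auto
        then show False using False by blast
      qed
      have fT: "finite T" unfolding T_def by simp
      define F where "F = (\<Union>u\<in>T. set (map idx u))"
      have fF: "finite F" unfolding F_def using fT by simp
      have nF: "F \<noteq> {}"
      proof -
        obtain u where "u \<in> T" using Tne by blast
        then have "u \<noteq> []" unfolding T_def by auto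
        then show ?thesis unfolding F_def using \<open>u \<in> T\<close> by (cases u) auto
      qed
      obtain m n0 where n0F: "n0 \<in> F" and m0: "m \<noteq> 0" and ph0: "phi (H (m + n0)) \<noteq> 0"
        and phz: "\<And>n. n \<in> F \<Longrightarrow> n \<noteq> n0 \<Longrightarrow> phi (H (m + n)) = 0"
        using tri[OF fin c2 fF nF] by blast
      define \<kappa> where "\<kappa> = - of_int m * phi (H (m + n0))"
      have k0: "\<kappa> \<noteq> 0" using m0 ph0 unfolding \<kappa>_def by simp
      define cf where "cf u = lk s u * (of_nat (count_list (map idx u) n0) * \<kappa>)" for u
      define rw where "rw u = map L (remove1 n0 (map idx u))" for u
      define s' where "s' = (\<Sum>u\<in>T. smul (cf u) (wd (rw u)))"
      define t' where "t' = pre (H m) s - smul (phi (H m)) s"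
      define Y where "Y u = pre (H m) (wd u) - smul (phi (H m)) (wd u)" for u
      have "pre (H m) s \<in> M" by (rule preM[OF s(3)])
      moreover have "smul (phi (H m)) s \<in> M" using sub s(3) unfolding subspace_T_def by blast
      ultimately have t'M: "t' \<in> M" unfolding t'_def by (rule subspace_T_diff[OF sub])
      have X: "t' = (\<Sum>u\<in>ks s. smul (lk s u) (Y u))" unfolding t'_def Y_def by (rule pre_minus_expand)
      have YD: "Y u - Dm phi m (map idx u) \<in> Fz phi (int r - 1)" if "u \<in> ks s" for u
      proof -
        have u: "wdn (map idx u) = wd u" using sortedL_wdn sk[OF that] by blast
        have "Y u - Dm phi m (map idx u) \<in> Fz phi (int (length (map idx u)) - 2)"
          using Dm_lemma[of "map idx u" phi] u unfolding Y_def by simp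
        then show ?thesis by (rule Fz_mono) (use sk[OF that] in auto)
      qed
      have low: "smul (lk s u) (Y u) \<in> Fz phi (int r - 1)" if "u \<in> ks s - T" for u
      proof -
        have "length u \<le> r" using that sk unfolding T_def by fastforce
        then have "Dm phi m (map idx u) \<in> Fz phi (int r - 1)"
          using Dm_Fz[of phi m "map idx u"] by (auto intro: Fz_mono)
        then have "(Y u - Dm phi m (map idx u)) + Dm phi m (map idx u) \<in> Fz phi (int r - 1)" using YD[of u] that by (intro Fz_add) auto
        then have "Y u \<in> Fz phi (int r - 1)" by simp
        then show ?thesis by (rule Fz_smul)
      qed
      have top: "smul (lk s u) (Y u) - smul (cf u) (wd (rw u)) \<in> Fz phi (int r - 1)" if "u \<in> T" for u
      proof -
        have uks: "u \<in> ks s" using that unfolding T_def by auto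
        have srt: "sorted (map idx u)" using sortedL_map sk[OF uks] by blast
        have "\<And>n. n \<in> set (map idx u) \<Longrightarrow> n \<noteq> n0 \<Longrightarrow> phi (H (m + n)) = 0"
          using phz that unfolding F_def by blast
        then have "Dm phi m (map idx u) = smul (of_nat (count_list (map idx u) n0) * \<kappa>) (wd (rw u))"
          using Dm_tri[OF srt] unfolding \<kappa>_def rw_def wdn_def by blast
        then have "smul (cf u) (wd (rw u)) = smul (lk s u) (Dm phi m (map idx u))"
          unfolding cf_def by simp
        then show ?thesis using Fz_smul[OF YD[OF uks], of "lk s u"] by (simp add: smul_diff)
      qed
      have "t' - s' = (\<Sum>u\<in>ks s - T. smul (lk s u) (Y u)) + (\<Sum>u\<in>T. smul (lk s u) (Y u) - smul (cf u) (wd (rw u)))"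
      proof -
        have "T \<subseteq> ks s" unfolding T_def by auto
        then have "(\<Sum>u\<in>ks s. smul (lk s u) (Y u)) = (\<Sum>u\<in>ks s - T. smul (lk s u) (Y u)) + (\<Sum>u\<in>T. smul (lk s u) (Y u))"
          by (simp add: sum.subset_diff)
        then show ?thesis unfolding X s'_def by (simp add: sum_subtractf)
      qed
      then have tF: "t' - s' \<in> Fz phi (int r - 1)"
        using low top by (auto intro!: Fz_add Fz_sum)
      then obtain e where e: "e \<in> SPz (int r - 1)" "t' - s' - e \<in> Wker phi" unfolding Fz_def by blast
      define s'' where "s'' = s' + e"
      have s''M: "s'' \<in> M"
      proof -
        have "t' - s'' \<in> M" using e(2) WM unfolding s''_def by (auto simp: algebra_simps)
        then have "t' - (t' - s'') \<in> M" using t'M sub subspace_T_diff by blast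
        then show ?thesis by simp
      qed
      have s'SP: "s' \<in> SPz (int r)"
      proof -
        have "ks s' \<subseteq> (\<Union>u\<in>T. ks (smul (cf u) (wd (rw u))))" unfolding s'_def by (rule keys_sum)
        moreover have "ks (smul (cf u) (wd (rw u))) \<subseteq> {w. sortedL w \<and> int (length w) \<le> int r}" if "u \<in> T" for u
        proof (cases "cf u = 0")
          case True then show ?thesis using ks_smul_wd[of "cf u" "rw u"] by simp
        next
          case False
          then have "count_list (map idx u) n0 \<noteq> 0" unfolding cf_def by auto
          then have n0u: "n0 \<in> set (map idx u)" by (simp add: count_list_0_iff)
          have uks: "u \<in> ks s" and lu: "length u = Suc r" using that unfolding T_def by auto
          have srt: "sorted (map idx u)" using sortedL_map sk[OF uks] by blast
          have "sortedL (rw u)" unfolding rw_def sortedL_def using srt by (auto intro: sorted_remove1)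
          moreover have "length (rw u) = r" unfolding rw_def using n0u lu by (simp add: length_remove1)
          ultimately show ?thesis using ks_smul_wd[of "cf u" "rw u"] False by auto
        qed
        ultimately show ?thesis unfolding SPz_def by blast
      qed
      have s''SP: "s'' \<in> SPz (int r)" unfolding s''_def using s'SP SPz_mono[OF e(1)] by (auto intro: SPz_add)
      have s''0: "s'' \<noteq> 0"
      proof -
        obtain u0 where u0: "u0 \<in> T" "n0 \<in> set (map idx u0)" using n0F unfolding F_def by blast
        have u0ks: "u0 \<in> ks s" and lu0: "length u0 = Suc r" using u0 unfolding T_def by auto
        have srt0: "sorted (map idx u0)" using sortedL_map sk[OF u0ks] by blast
        have len0: "length (rw u0) = r" unfolding rw_def using u0 lu0 by (simp add: length_remove1)
        have le: "lk e (rw u0) = 0"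
        proof (rule ccontr)
          assume "lk e (rw u0) \<noteq> 0"
          then have "rw u0 \<in> ks e" by (simp add: in_ks)
          then show False using e(1) len0 unfolding SPz_def by fastforce
        qed
        have inj: "u = u0" if "u \<in> T" "cf u \<noteq> 0" "rw u = rw u0" for u
        proof -
          have "count_list (map idx u) n0 \<noteq> 0" using that unfolding cf_def by auto
          then have n0u: "n0 \<in> set (map idx u)" by (simp add: count_list_0_iff)
          have uks: "u \<in> ks s" using that unfolding T_def by auto
          have srt: "sorted (map idx u)" using sortedL_map sk[OF uks] by blast
          have "remove1 n0 (map idx u) = remove1 n0 (map idx u0)"
            using that(3) unfolding rw_def by (simp add: inj_map_eq_map inj_def)
          then have "insort n0 (remove1 n0 (map idx u)) = insort n0 (remove1 n0 (map idx u0))" by simp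
          then have "map idx u = map idx u0"
            unfolding insort_remove1[OF n0u srt] insort_remove1[OF u0(2) srt0] .
          then have "map L (map idx u) = map L (map idx u0)" by simp
          then show ?thesis unfolding sortedL_eq[OF conjunct1[OF sk[OF uks]]] sortedL_eq[OF conjunct1[OF sk[OF u0ks]]] .
        qed
        have "lk s' (rw u0) = (\<Sum>u\<in>T. if rw u0 = rw u then cf u else 0)"
          unfolding s'_def by (auto simp: lookup_sum intro!: sum.cong)
        also have "\<dots> = cf u0 + (\<Sum>u\<in>T - {u0}. if rw u0 = rw u then cf u else 0)"
          using fT u0(1) by (simp add: sum.remove)
        also have "(\<Sum>u\<in>T - {u0}. if rw u0 = rw u then cf u else 0) = 0"
        proof (rule sum.neutral, intro ballI)
          fix u assume "u \<in> T - {u0}"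
          then show "(if rw u0 = rw u then cf u else 0) = 0" using inj[of u] by (cases "cf u = 0") auto
        qed
        finally have "lk s' (rw u0) = cf u0" by simp
        moreover have "cf u0 \<noteq> 0"
        proof -
          have "count_list (map idx u0) n0 \<noteq> 0" using u0(2) by (simp add: count_list_0_iff)
          moreover have "lk s u0 \<noteq> 0" using u0ks by (simp add: in_ks)
          ultimately show ?thesis unfolding cf_def using k0 by simp
        qed
        ultimately have "lk s'' (rw u0) \<noteq> 0" unfolding s''_def by (simp add: lookup_add le)
        then show ?thesis by auto
      qed
      show ?thesis using Suc.IH s''SP s''0 s''M by blast
    qed
  qed
qed

lemma irr_main:
  assumes st: "stable phi M" and fin: "finite (S_phi phi)" and c2: "card (S_phi phi) \<ge> 2"
    and ne: "M \<noteq> Wker phi"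
  shows "M = UNIV"
proof -
  have sub: "subspace_T M" and WM: "Wker phi \<subseteq> M" and preM: "\<And>x t. t \<in> M \<Longrightarrow> pre x t \<in> M"
    using st unfolding stable_def by auto
  obtain t where tM: "t \<in> M" and tW: "t \<notin> Wker phi" using WM ne by blast
  obtain d where "t \<in> Fz phi d" using tens_Fz by blast
  then obtain s where s: "s \<in> SPz d" "t - s \<in> Wker phi" unfolding Fz_def by blast
  have "t - s \<in> M" using s(2) WM by auto
  have "t - (t - s) \<in> M" by (rule subspace_T_diff[OF sub tM \<open>t - s \<in> M\<close>])
  then have sM: "s \<in> M" by simp
  have s0: "s \<noteq> 0" using s(2) tW by auto
  have "d \<ge> 0" using SPz_neg[OF _ s(1)] s0 by force
  then obtain r where "d = int r" using nonneg_eq_int by blast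
  then have e: "wd [] \<in> M" using descent[OF st fin c2, of r] s sM s0 by blast
  have w: "wd u \<in> M" for u
  proof (induction u)
    case Nil then show ?case by (rule e)
  next
    case (Cons x u) then show ?case using preM[of "wd u" x] by simp
  qed
  have "t' \<in> M" for t'
  proof -
    have "(\<Sum>u\<in>ks t'. smul (lk t' u) (wd u)) \<in> M"
      by (rule subspace_T_sum[OF sub]) (use w sub in \<open>auto simp: subspace_T_def\<close>)
    then show ?thesis using tens_expand[of t'] by simp
  qed
  then show ?thesis by blast
qed


datatype var = Yv int | Zv int
type_synonym mono = "var \<Rightarrow>\<^sub>0 nat"
type_synonym pol = "mono \<Rightarrow>\<^sub>0 complex"

definition X :: "var \<Rightarrow> pol" where "X v = sg (sg v 1) 1"
definition cs :: "complex \<Rightarrow> pol \<Rightarrow> pol" where "cs c f = sg 0 c * f"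

lemma cs_add: "cs c (f + g) = cs c f + cs c g" by (simp add: cs_def distrib_left)
lemma cs_add2: "cs (c + d) f = cs c f + cs d f" by (simp add: cs_def single_add distrib_right)
lemma cs_zero [simp]: "cs c 0 = 0" by (simp add: cs_def)
lemma cs_zero2 [simp]: "cs 0 f = 0" by (simp add: cs_def)
lemma cs_one [simp]: "cs 1 f = f" by (simp add: cs_def)
lemma cs_cs [simp]: "cs c (cs d f) = cs (c * d) f"
  by (simp add: cs_def mult.assoc[symmetric] mult_single)
lemma cs_mult1: "cs c f * g = cs c (f * g)" by (simp add: cs_def mult.assoc)
lemma cs_mult2: "f * cs c g = cs c (f * g)" by (simp add: cs_def mult.left_commute)
lemma cs_sum: "cs c (sum f A) = (\<Sum>x\<in>A. cs c (f x))" by (simp add: cs_def sum_distrib_left)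
lemma cs_sum2: "cs (sum f A) g = (\<Sum>x\<in>A. cs (f x) g)"
  by (induction A rule: infinite_finite_induct) (auto simp: cs_add2)
lemma cs_diff: "cs c (f - g) = cs c f - cs c g" by (simp add: cs_def right_diff_distrib)
lemma cs_uminus: "cs c (- f) = - cs c f" by (simp add: cs_def)
lemma cs_neg: "cs (- c) f = - cs c f" by (simp add: cs_def single_uminus)
lemma cs_sg: "cs c (sg a d) = sg a (c * d)" by (simp add: cs_def mult_single)

definition dmon :: "(var \<Rightarrow> pol) \<Rightarrow> mono \<Rightarrow> complex \<Rightarrow> pol" where
  "dmon \<delta> \<alpha> c = (\<Sum>v\<in>ks \<alpha>. sg (\<alpha> - sg v 1) (c * of_nat (lk \<alpha> v)) * \<delta> v)"

definition der :: "(var \<Rightarrow> pol) \<Rightarrow> pol \<Rightarrow> pol" where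
  "der \<delta> f = (\<Sum>\<alpha>\<in>ks f. dmon \<delta> \<alpha> (lk f \<alpha>))"

lemma dmon_0 [simp]: "dmon \<delta> \<alpha> 0 = 0" by (simp add: dmon_def)
lemma dmon_add: "dmon \<delta> \<alpha> (a + b) = dmon \<delta> \<alpha> a + dmon \<delta> \<alpha> b"
  by (simp add: dmon_def distrib_right single_add sum.distrib)

lemma der_add: "der \<delta> (f + g) = der \<delta> f + der \<delta> g"
  unfolding der_def by (rule keysum_add) (auto simp: dmon_add)
lemma der_zero [simp]: "der \<delta> 0 = 0" by (simp add: der_def)
lemma der_sum: "der \<delta> (sum f A) = (\<Sum>x\<in>A. der \<delta> (f x))"
  by (induction A rule: infinite_finite_induct) (auto simp: der_add)
lemma der_uminus: "der \<delta> (- f) = - der \<delta> f"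
  by (metis add_eq_0_iff der_add der_zero)
lemma der_diff: "der \<delta> (f - g) = der \<delta> f - der \<delta> g"
  by (metis diff_conv_add_uminus der_add der_uminus)
lemma der_single: "der \<delta> (sg \<alpha> c) = dmon \<delta> \<alpha> c"
  unfolding der_def by (rule keysum_single) simp

lemma lk_mono_minus: "lk (\<alpha> - sg v (Suc 0)) w = lk \<alpha> w - (if w = v then 1 else 0)"
  by (simp add: lookup_minus lk_sg)

lemma mono_split: "lk \<alpha> v > 0 \<Longrightarrow> sg v 1 + (\<alpha> - sg v 1) = (\<alpha> :: mono)"
  by (rule poly_mapping_eqI) (auto simp: lookup_add lk_mono_minus lk_sg)

lemma mono_shift: "lk \<alpha> v > 0 \<Longrightarrow> (\<alpha> - sg v 1) + \<beta> = (\<alpha> + \<beta>) - (sg v 1 :: mono)"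
  by (rule poly_mapping_eqI) (auto simp: lookup_add lk_mono_minus lk_sg)

lemma ks_mono_add: "ks (\<alpha> + \<beta> :: mono) = ks \<alpha> \<union> ks \<beta>"
  by (auto simp: in_ks lookup_add)

lemma dmon_superset:
  assumes "finite K" "ks \<alpha> \<subseteq> K"
  shows "dmon \<delta> \<alpha> c = (\<Sum>v\<in>K. sg (\<alpha> - sg v 1) (c * of_nat (lk \<alpha> v)) * \<delta> v)"
  unfolding dmon_def by (rule sum.mono_neutral_left) (use assms in \<open>auto simp: in_ks\<close>)

lemma leibniz_single:
  "der \<delta> (sg \<alpha> a * sg \<beta> b) = der \<delta> (sg \<alpha> a) * sg \<beta> b + sg \<alpha> a * der \<delta> (sg \<beta> b)"
proof -
  let ?K = "ks \<alpha> \<union> ks \<beta>"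
  have fK: "finite ?K" by simp
  have l: "der \<delta> (sg \<alpha> a * sg \<beta> b) = (\<Sum>v\<in>?K. sg ((\<alpha> + \<beta>) - sg v 1) (a * b * of_nat (lk (\<alpha> + \<beta>) v)) * \<delta> v)"
    unfolding mult_single der_single by (rule dmon_superset) (auto simp: ks_mono_add)
  have r1: "der \<delta> (sg \<alpha> a) * sg \<beta> b = (\<Sum>v\<in>?K. sg ((\<alpha> + \<beta>) - sg v 1) (a * b * of_nat (lk \<alpha> v)) * \<delta> v)"
  proof -
    have "der \<delta> (sg \<alpha> a) * sg \<beta> b = (\<Sum>v\<in>?K. sg (\<alpha> - sg v 1) (a * of_nat (lk \<alpha> v)) * \<delta> v) * sg \<beta> b"
      unfolding der_single by (subst dmon_superset[OF fK]) auto
    also have "\<dots> = (\<Sum>v\<in>?K. sg ((\<alpha> + \<beta>) - sg v 1) (a * b * of_nat (lk \<alpha> v)) * \<delta> v)"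
      unfolding sum_distrib_right
    proof (rule sum.cong[OF refl])
      fix v
      show "sg (\<alpha> - sg v 1) (a * of_nat (lk \<alpha> v)) * \<delta> v * sg \<beta> b = sg (\<alpha> + \<beta> - sg v 1) (a * b * of_nat (lk \<alpha> v)) * \<delta> v"
      proof (cases "lk \<alpha> v > 0")
        case True
        have "sg (\<alpha> - sg v 1) (a * of_nat (lk \<alpha> v)) * \<delta> v * sg \<beta> b = (sg (\<alpha> - sg v 1) (a * of_nat (lk \<alpha> v)) * sg \<beta> b) * \<delta> v"
          by (simp add: ac_simps)
        also have "\<dots> = sg (\<alpha> + \<beta> - sg v 1) (a * of_nat (lk \<alpha> v) * b) * \<delta> v"
          by (simp only: mult_single mono_shift[OF True])
        also have "\<dots> = sg (\<alpha> + \<beta> - sg v 1) (a * b * of_nat (lk \<alpha> v)) * \<delta> v"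
          by (simp only: ac_simps)
        finally show ?thesis .
      qed simp
    qed
    finally show ?thesis .
  qed
  have r2: "sg \<alpha> a * der \<delta> (sg \<beta> b) = (\<Sum>v\<in>?K. sg ((\<alpha> + \<beta>) - sg v 1) (a * b * of_nat (lk \<beta> v)) * \<delta> v)"
  proof -
    have "sg \<alpha> a * der \<delta> (sg \<beta> b) = sg \<alpha> a * (\<Sum>v\<in>?K. sg (\<beta> - sg v 1) (b * of_nat (lk \<beta> v)) * \<delta> v)"
      unfolding der_single by (subst dmon_superset[OF fK]) auto
    also have "\<dots> = (\<Sum>v\<in>?K. sg ((\<alpha> + \<beta>) - sg v 1) (a * b * of_nat (lk \<beta> v)) * \<delta> v)"
      unfolding sum_distrib_left
    proof (rule sum.cong[OF refl])
      fix v
      show "sg \<alpha> a * (sg (\<beta> - sg v 1) (b * of_nat (lk \<beta> v)) * \<delta> v) = sg (\<alpha> + \<beta> - sg v 1) (a * b * of_nat (lk \<beta> v)) * \<delta> v"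
      proof (cases "lk \<beta> v > 0")
        case True
        have e: "\<alpha> + (\<beta> - sg v 1) = \<alpha> + \<beta> - sg v 1"
          using mono_shift[OF True, of \<alpha>] by (simp add: add.commute)
        have "sg \<alpha> a * (sg (\<beta> - sg v 1) (b * of_nat (lk \<beta> v)) * \<delta> v) = (sg \<alpha> a * sg (\<beta> - sg v 1) (b * of_nat (lk \<beta> v))) * \<delta> v"
          by (simp only: mult.assoc)
        also have "\<dots> = sg (\<alpha> + \<beta> - sg v 1) (a * (b * of_nat (lk \<beta> v))) * \<delta> v"
          by (simp only: mult_single e)
        finally show ?thesis by (simp only: ac_simps)
      qed simp
    qed
    finally show ?thesis .
  qed
  show ?thesis unfolding l r1 r2 by (simp add: lookup_add distrib_left distrib_right sum.distrib[symmetric] single_add)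
qed

lemma pol_expand: "(f :: pol) = (\<Sum>\<alpha>\<in>ks f. sg \<alpha> (lk f \<alpha>))"
  by (rule pm_expand)

lemma leibniz: "der \<delta> (f * g) = der \<delta> f * g + f * der \<delta> g"
proof -
  have sg_case: "der \<delta> (sg \<alpha> a * g) = der \<delta> (sg \<alpha> a) * g + sg \<alpha> a * der \<delta> g" for \<alpha> a
  proof -
    have "der \<delta> (sg \<alpha> a * g) = der \<delta> (\<Sum>\<beta>\<in>ks g. sg \<alpha> a * sg \<beta> (lk g \<beta>))"
      by (subst pol_expand[of g]) (simp add: sum_distrib_left)
    also have "\<dots> = (\<Sum>\<beta>\<in>ks g. der \<delta> (sg \<alpha> a) * sg \<beta> (lk g \<beta>) + sg \<alpha> a * der \<delta> (sg \<beta> (lk g \<beta>)))"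
      by (simp add: der_sum leibniz_single)
    also have "\<dots> = der \<delta> (sg \<alpha> a) * (\<Sum>\<beta>\<in>ks g. sg \<beta> (lk g \<beta>)) + sg \<alpha> a * der \<delta> (\<Sum>\<beta>\<in>ks g. sg \<beta> (lk g \<beta>))"
      by (simp add: sum.distrib sum_distrib_left der_sum)
    finally show ?thesis using pol_expand[of g] by simp
  qed
  have "der \<delta> (f * g) = der \<delta> (\<Sum>\<alpha>\<in>ks f. sg \<alpha> (lk f \<alpha>) * g)"
    by (subst pol_expand[of f]) (simp add: sum_distrib_right)
  also have "\<dots> = (\<Sum>\<alpha>\<in>ks f. der \<delta> (sg \<alpha> (lk f \<alpha>)) * g + sg \<alpha> (lk f \<alpha>) * der \<delta> g)"
    by (simp add: der_sum sg_case)
  also have "\<dots> = der \<delta> (\<Sum>\<alpha>\<in>ks f. sg \<alpha> (lk f \<alpha>)) * g + (\<Sum>\<alpha>\<in>ks f. sg \<alpha> (lk f \<alpha>)) * der \<delta> g"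
    by (simp add: sum.distrib sum_distrib_right der_sum)
  finally show ?thesis using pol_expand[of f] by simp
qed

lemma der_const [simp]: "der \<delta> (sg 0 c) = 0"
  by (simp add: der_single dmon_def)

lemma der_one [simp]: "der \<delta> 1 = 0"
  using der_const[of \<delta> 1] by simp

lemma der_cs: "der \<delta> (cs c f) = cs c (der \<delta> f)"
  unfolding cs_def by (simp add: leibniz)

lemma der_X: "der \<delta> (X v) = \<delta> v"
proof -
  have "der \<delta> (X v) = sg (sg v 1 - sg v 1) (1 * of_nat 1) * \<delta> v"
    unfolding X_def der_single dmon_def by simp
  then show ?thesis by simp
qed

lemma der_delta_cs: "der (\<lambda>v. cs c (\<delta> v)) f = cs c (der \<delta> f)"
  unfolding der_def dmon_def by (simp add: cs_sum cs_mult2)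

lemma der_delta_zero: "der (\<lambda>v. 0) f = 0"
  unfolding der_def dmon_def by simp

definition derlike :: "(pol \<Rightarrow> pol) \<Rightarrow> bool" where
  "derlike A \<longleftrightarrow> (\<forall>f g. A (f + g) = A f + A g) \<and> (\<forall>f g. A (f * g) = A f * g + f * A g) \<and> (\<forall>c. A (sg 0 c) = 0)"

lemma derlike_der: "derlike (der \<delta>)"
  unfolding derlike_def by (simp add: der_add leibniz)


lemma derlike_0: "derlike A \<Longrightarrow> A 0 = 0"
  unfolding derlike_def by (metis add_cancel_right_right add_0)

lemma derlike_sum: "derlike A \<Longrightarrow> A (sum h K) = (\<Sum>x\<in>K. A (h x))"
  by (induction K rule: infinite_finite_induct) (auto simp: derlike_0, simp add: derlike_def)

lemma derlike_comm:
  assumes "derlike A" "derlike B"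
  shows "derlike (\<lambda>f. A (B f) - B (A f))"
  using assms derlike_0[OF assms(1)] derlike_0[OF assms(2)] unfolding derlike_def by (simp add: algebra_simps)

definition deg :: "mono \<Rightarrow> nat" where "deg \<alpha> = sum (lk \<alpha>) (ks \<alpha>)"

lemma deg_minus: 
  assumes "v \<in> ks \<alpha>" shows "deg (\<alpha> - sg v 1) < deg \<alpha>"
proof -
  have pos: "lk \<alpha> v > 0" using assms by (simp add: in_ks)
  have "deg (\<alpha> - sg v 1) = (\<Sum>w\<in>ks \<alpha>. lk (\<alpha> - sg v 1) w)"
    unfolding deg_def by (rule sum.mono_neutral_left) (auto simp: in_ks lk_mono_minus split: if_splits)
  also have "\<dots> < (\<Sum>w\<in>ks \<alpha>. lk \<alpha> w)"
    by (rule sum_strict_mono_ex1) (use assms pos in \<open>auto simp: lk_mono_minus\<close>)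
  finally show ?thesis unfolding deg_def .
qed

lemma derlike_unique:
  assumes A: "derlike A" and B: "derlike B" and eq: "\<And>v. A (X v) = B (X v)"
  shows "A f = B f"
proof -
  note addA = derlike_sum[OF A] and addB = derlike_sum[OF B]
  have sgc: "A (sg \<alpha> c) = B (sg \<alpha> c)" for \<alpha> c
  proof (induction "deg \<alpha>" arbitrary: \<alpha> c rule: less_induct)
    case less
    show ?case
    proof (cases "\<alpha> = 0")
      case True then show ?thesis using A B unfolding derlike_def by simp
    next
      case False
      then have "ks \<alpha> \<noteq> {}" by simp
      then obtain v where v: "v \<in> ks \<alpha>" by blast
      then have pos: "lk \<alpha> v > 0" by (simp add: in_ks)
      have e: "sg \<alpha> c = X v * sg (\<alpha> - sg v 1) c"
        unfolding X_def mult_single mono_split[OF pos] by simp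
      have ih: "A (sg (\<alpha> - sg v 1) c) = B (sg (\<alpha> - sg v 1) c)"
        using less deg_minus[OF v] by blast
      show ?thesis unfolding e using A B eq ih unfolding derlike_def by simp
    qed
  qed
  show ?thesis
    by (subst (1 2) pol_expand[of f]) (simp add: addA addB sgc)
qed

lemma der_comm:
  "der \<delta>1 (der \<delta>2 f) - der \<delta>2 (der \<delta>1 f) = der (\<lambda>v. der \<delta>1 (\<delta>2 v) - der \<delta>2 (\<delta>1 v)) f"
  using derlike_unique[OF derlike_comm[OF derlike_der derlike_der] derlike_der]
  by (simp add: der_X)

lemma der_cong: "(\<And>v. \<delta> v = \<delta>' v) \<Longrightarrow> der \<delta> f = der \<delta>' f"
  by (metis ext)


lemma cs_diff2: "cs a f - cs b f = cs (a - b) f" by (simp add: cs_def single_diff left_diff_distrib)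

lemma keysum_bvec: "(\<Sum>k\<in>ks (bvec c b). cs (lk (bvec c b) k) (G k)) = cs c (G b)"
  unfolding bvec_def by (rule keysum_single[where h = "\<lambda>k c. cs c (G k)"]) simp

definition ro :: "(gb \<Rightarrow> pol \<Rightarrow> pol) \<Rightarrow> gb list \<Rightarrow> pol \<Rightarrow> pol" where
  "ro rho u f = foldr rho u f"

lemma ro_Nil [simp]: "ro rho [] f = f" by (simp add: ro_def)
lemma ro_Cons [simp]: "ro rho (x # u) f = rho x (ro rho u f)" by (simp add: ro_def)
lemma ro_app: "ro rho (u @ w) f = ro rho u (ro rho w f)" by (simp add: ro_def)

lemma act_pre: "act g t = (\<Sum>k\<in>ks g. smul (lk g k) (pre k t))"
proof -
  have "act g t = (\<Sum>u\<in>ks t. \<Sum>k\<in>ks g. smul (lk g k) (smul (lk t u) (wd (k # u))))"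
    unfolding act_def ins_def by (simp add: smul_sum mult.commute)
  also have "\<dots> = (\<Sum>k\<in>ks g. \<Sum>u\<in>ks t. smul (lk g k) (smul (lk t u) (wd (k # u))))"
    by (rule sum.swap)
  also have "\<dots> = (\<Sum>k\<in>ks g. smul (lk g k) (pre k t))"
    by (simp add: pre_eq smul_sum)
  finally show ?thesis .
qed

locale rep =
  fixes phi :: "gb \<Rightarrow> complex" and rho :: "gb \<Rightarrow> pol \<Rightarrow> pol" and v :: pol
  assumes radd: "rho x (f + g) = rho x f + rho x g"
    and rcs: "rho x (cs c f) = cs c (rho x f)"
    and rbr: "rho x (rho y f) - rho y (rho x f) = (\<Sum>k\<in>ks (br x y). cs (lk (br x y) k) (rho k f))"
    and reig: "in_p p \<Longrightarrow> rho p v = cs (phi p) v"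
begin

lemma r0 [simp]: "rho x 0 = 0"
  by (metis add_cancel_right_right radd)

lemma rsum: "rho x (sum h A) = (\<Sum>i\<in>A. rho x (h i))"
  by (induction A rule: infinite_finite_induct) (auto simp: radd)

lemma ro_add: "ro rho u (f + g) = ro rho u f + ro rho u g"
  by (induction u) (auto simp: radd)
lemma ro_cs: "ro rho u (cs c f) = cs c (ro rho u f)"
  by (induction u) (auto simp: rcs)
lemma ro_0 [simp]: "ro rho u 0 = 0"
  by (induction u) auto
lemma ro_sum: "ro rho u (sum h A) = (\<Sum>i\<in>A. ro rho u (h i))"
  by (induction A rule: infinite_finite_induct) (auto simp: ro_add)
lemma ro_diff: "ro rho u (f - g) = ro rho u f - ro rho u g"
  by (metis add_diff_cancel diff_add_cancel ro_add)

definition FF :: "tens \<Rightarrow> pol" where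
  "FF t = (\<Sum>u\<in>ks t. cs (lk t u) (ro rho u v))"

lemma FF_add: "FF (a + b) = FF a + FF b"
  unfolding FF_def by (rule keysum_add) (auto simp: cs_add2)
lemma FF_0 [simp]: "FF 0 = 0" by (simp add: FF_def)
lemma FF_smul: "FF (smul c t) = cs c (FF t)"
proof (cases "c = 0")
  case True then show ?thesis by simp
next
  case False
  have k: "ks (smul c t) = ks t" using False by (auto simp: in_ks)
  show ?thesis unfolding FF_def k by (simp add: cs_sum)
qed
lemma FF_uminus: "FF (- t) = - FF t"
  by (metis FF_smul smul_minus1 cs_neg cs_one)
lemma FF_diff: "FF (a - b) = FF a - FF b"
  by (metis FF_add FF_uminus diff_conv_add_uminus)
lemma FF_sum: "FF (sum h A) = (\<Sum>i\<in>A. FF (h i))"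
  by (induction A rule: infinite_finite_induct) (auto simp: FF_add)
lemma FF_wd [simp]: "FF (wd u) = ro rho u v"
  unfolding FF_def wd_def by simp
lemma FF_ins: "FF (ins u g w) = (\<Sum>k\<in>ks g. cs (lk g k) (ro rho (u @ [k] @ w) v))"
  unfolding ins_def by (simp add: FF_sum FF_smul)
lemma FF_pre: "FF (pre x t) = rho x (FF t)"
proof -
  have "FF (pre x t) = (\<Sum>u\<in>ks t. cs (lk t u) (rho x (ro rho u v)))"
    by (simp add: pre_eq FF_sum FF_smul)
  also have "\<dots> = rho x (FF t)" by (simp add: FF_def rsum rcs)
  finally show ?thesis .
qed

lemma FF_act: "FF (act g t) = (\<Sum>k\<in>ks g. cs (lk g k) (rho k (FF t)))"
  unfolding act_pre by (simp add: FF_sum FF_smul FF_pre)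

lemma Wker_FF: "t \<in> Wker phi \<Longrightarrow> FF t = 0"
proof -
  let ?N = "{t. FF t = 0}"
  have "subspace_T ?N" unfolding subspace_T_def by (auto simp: FF_add FF_smul)
  moreover have "Wrels phi \<subseteq> ?N"
  proof
    fix r assume "r \<in> Wrels phi"
    then show "r \<in> ?N"
      unfolding Wrels_def
    proof (elim UnE CollectE exE conjE)
      fix u w x y assume r: "r = wd (u @ [x, y] @ w) - wd (u @ [y, x] @ w) - ins u (br x y) w"
      let ?g = "ro rho w v"
      have "FF (ins u (br x y) w) = ro rho u (\<Sum>k\<in>ks (br x y). cs (lk (br x y) k) (rho k ?g))"
        unfolding FF_ins by (simp add: ro_sum ro_cs ro_app)
      also have "\<dots> = ro rho u (rho x (rho y ?g)) - ro rho u (rho y (rho x ?g))"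
        unfolding rbr[symmetric] ro_diff ..
      finally show "r \<in> ?N" by (simp add: r FF_diff ro_app)
    next
      fix u p assume r: "r = wd (u @ [p]) - smul (phi p) (wd u)" and "in_p p"
      show "r \<in> ?N" by (simp add: r FF_diff FF_smul ro_app reig[OF \<open>in_p p\<close>] ro_cs)
    qed
  qed
  ultimately show "t \<in> Wker phi \<Longrightarrow> FF t = 0" using Wker_least by blast
qed

end

section \<open>The model\<close>

definition Dv :: "int \<Rightarrow> var \<Rightarrow> pol" where
  "Dv n w = (case w of Yv i \<Rightarrow> cs (- of_int (i - n)) (X (Yv (i - n)))
                     | Zv i \<Rightarrow> cs (- of_int (i - n)) (X (Zv (i - n))))"

definition Pv :: "int \<Rightarrow> var \<Rightarrow> pol" where
  "Pv m w = (case w of Yv i \<Rightarrow> (if i = m then 1 else 0) | Zv i \<Rightarrow> 0)"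

definition ell :: "(gb \<Rightarrow> complex) \<Rightarrow> int \<Rightarrow> pol" where
  "ell phi n = (\<Sum>s\<in>S_phi phi. cs (- of_int (s - n) * phi (H s)) (X (Yv (s - n))))"

fun rho :: "(gb \<Rightarrow> complex) \<Rightarrow> gb \<Rightarrow> pol \<Rightarrow> pol" where
  "rho phi (L n) f = der (Dv n) f + ell phi n * f"
| "rho phi (H m) f = der (Pv m) f + cs (phi (H m)) f"
| "rho phi (I m) f = 0"
| "rho phi (J m) f = 0"

lemma der_Pv_const: "der (Pv k) (Pv m w) = 0"
  by (cases w) (auto simp: Pv_def)

lemma K1: "der (Dv n) (Dv m w) - der (Dv m) (Dv n w) = cs (of_int (m - n)) (Dv (m + n) w)"
proof (cases w)
  case (Yv i)
  have e: "i - m - n = i - (m + n)" "i - n - m = i - (m + n)" by simp_all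
  show ?thesis unfolding Yv by (simp add: Dv_def der_cs der_X e cs_diff2) (simp add: algebra_simps)
next
  case (Zv i)
  have e: "i - m - n = i - (m + n)" "i - n - m = i - (m + n)" by simp_all
  show ?thesis unfolding Zv by (simp add: Dv_def der_cs der_X e cs_diff2) (simp add: algebra_simps)
qed

lemma K2: "der (Dv n) (ell phi m) - der (Dv m) (ell phi n) = cs (of_int (m - n)) (ell phi (m + n))"
proof -
  have e: "s - m - n = s - (m + n)" "s - n - m = s - (m + n)" for s :: int by simp_all
  show ?thesis
    unfolding ell_def der_sum cs_sum sum_subtractf[symmetric]
    by (rule sum.cong[OF refl]) (simp add: Dv_def der_cs der_X e cs_diff2 algebra_simps)
qed

lemma K3: "der (Dv n) (Pv m w) - der (Pv m) (Dv n w) = cs (of_int m) (Pv (m + n) w)"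
proof (cases w)
  case (Yv i)
  show ?thesis unfolding Yv
    by (cases "i = m + n") (auto simp: Pv_def Dv_def der_cs der_X cs_neg der_uminus)
next
  case (Zv i)
  show ?thesis unfolding Zv by (simp add: Pv_def Dv_def der_cs der_X)
qed

lemma K4:
  assumes "finite (S_phi phi)"
  shows "der (Pv m) (ell phi n) = cs (- of_int m * phi (H (m + n))) 1"
proof -
  have "der (Pv m) (ell phi n) = (\<Sum>s\<in>S_phi phi. if s = m + n then cs (- of_int m * phi (H (m + n))) 1 else 0)"
    unfolding ell_def der_sum by (rule sum.cong[OF refl]) (auto simp: der_cs der_X Pv_def)
  also have "\<dots> = cs (- of_int m * phi (H (m + n))) 1"
    using assms by (auto simp: sum.delta S_phi_def)
  finally show ?thesis .
qed

lemma cs_comm: "cs a (cs b f) = cs b (cs a f)"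
  unfolding cs_def by (rule mult.left_commute)

lemma rho_add: "rho phi x (f + g) = rho phi x f + rho phi x g"
  by (cases x) (simp_all add: der_add cs_add distrib_left add_ac)

lemma rho_cs: "rho phi x (cs c f) = cs c (rho phi x f)"
  by (cases x) (simp_all add: der_cs cs_add cs_mult2 cs_comm[of c] del: cs_cs)

lemma ring_LL:
  fixes a b p q f lm ln dn dm :: "'a::comm_ring"
  shows "(a + (p * f + lm * dn) + ln * (dm + lm * f)) - (b + (q * f + ln * dm) + lm * (dn + ln * f)) = (a - b) + (p - q) * f"
  by (simp add: algebra_simps)

lemma ring_LH:
  fixes a b q f l dn dp :: "'a::comm_ring"
  assumes "\<And>x y. C (x + y) = C x + C y" "l * C f = C (l * f)"
  shows "(a + C dn) + l * (dp + C f) - ((b + (q * f + l * dp)) + C (dn + l * f)) = (a - b) - q * f"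
  using assms by (simp add: algebra_simps)

lemma ring_HH:
  fixes a b x y z z' :: "'a::ab_group_add"
  assumes "z = z'"
  shows "(a + x) + (y + z) - ((b + y) + (x + z')) = a - b"
  using assms by (simp add: algebra_simps)

lemma LL: "rho phi (L n) (rho phi (L m) f) - rho phi (L m) (rho phi (L n) f)
   = cs (of_int (m - n)) (rho phi (L (m + n)) f)"
proof -
  have "rho phi (L n) (rho phi (L m) f) - rho phi (L m) (rho phi (L n) f)
     = (der (Dv n) (der (Dv m) f) - der (Dv m) (der (Dv n) f)) + (der (Dv n) (ell phi m) - der (Dv m) (ell phi n)) * f"
    unfolding rho.simps der_add leibniz by (rule ring_LL)
  also have "\<dots> = cs (of_int (m - n)) (der (Dv (m + n)) f) + cs (of_int (m - n)) (ell phi (m + n)) * f"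
    unfolding der_comm K2 K1 der_delta_cs ..
  finally show ?thesis by (simp add: cs_add cs_mult1)
qed

lemma LH:
  assumes "finite (S_phi phi)"
  shows "rho phi (L n) (rho phi (H m) f) - rho phi (H m) (rho phi (L n) f)
   = cs (of_int m) (rho phi (H (m + n)) f)"
proof -
  have "rho phi (L n) (rho phi (H m) f) - rho phi (H m) (rho phi (L n) f)
     = (der (Dv n) (der (Pv m) f) - der (Pv m) (der (Dv n) f)) - der (Pv m) (ell phi n) * f"
    unfolding rho.simps der_add leibniz der_cs by (rule ring_LH) (auto simp: cs_add cs_mult2)
  also have "\<dots> = cs (of_int m) (der (Pv (m + n)) f) - cs (- of_int m * phi (H (m + n))) 1 * f"
    unfolding der_comm K3 der_delta_cs K4[OF assms] ..
  also have "\<dots> = cs (of_int m) (der (Pv (m + n)) f) + cs (of_int m * phi (H (m + n))) f"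
    by (simp add: cs_mult1 cs_neg)
  finally show ?thesis by (simp add: cs_add)
qed

lemma HH: "rho phi (H m) (rho phi (H k) f) - rho phi (H k) (rho phi (H m) f) = 0"
proof -
  have "rho phi (H m) (rho phi (H k) f) - rho phi (H k) (rho phi (H m) f)
     = der (Pv m) (der (Pv k) f) - der (Pv k) (der (Pv m) f)"
    unfolding rho.simps der_add der_cs cs_add by (rule ring_HH) (rule cs_comm)
  also have "\<dots> = 0" unfolding der_comm der_Pv_const by (simp add: der_delta_zero)
  finally show ?thesis .
qed

lemma rho_0 [simp]: "rho phi x 0 = 0" by (cases x) auto

lemma model_rep:
  assumes fin: "finite (S_phi phi)" and pI: "\<And>n. phi (I n) = 0" and pJ: "\<And>n. phi (J n) = 0"
    and vH: "\<And>m. der (Pv m) v = 0"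
  shows "rep phi (rho phi) v"
proof
  fix x f g show "rho phi x (f + g) = rho phi x f + rho phi x g" by (rule rho_add)
next
  fix x c f show "rho phi x (cs c f) = cs c (rho phi x f)" by (rule rho_cs)
next
  fix p assume "in_p p"
  then show "rho phi p v = cs (phi p) v" using pI pJ vH by (cases p) auto
next
  fix x y f
  show "rho phi x (rho phi y f) - rho phi y (rho phi x f) = (\<Sum>k\<in>ks (br x y). cs (lk (br x y) k) (rho phi k f))"
  proof (cases x)
    case xL: (L n) show ?thesis
    proof (cases y)
      case (L m) show ?thesis unfolding xL L br.simps keysum_bvec by (rule LL)
    next
      case (H m) show ?thesis unfolding xL H br.simps keysum_bvec by (rule LH[OF fin])
    next
      case (I m) show ?thesis unfolding xL I br.simps keysum_bvec by simp
    next
      case (J m) show ?thesis unfolding xL J br.simps keysum_bvec by simp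
    qed
  next
    case xH: (H m) show ?thesis
    proof (cases y)
      case (L n)
      have "rho phi (H m) (rho phi (L n) f) - rho phi (L n) (rho phi (H m) f) = - cs (of_int m) (rho phi (H (m + n)) f)"
        using LH[OF fin, of n m f] by (metis minus_diff_eq)
      then show ?thesis unfolding xH L br.simps keysum_bvec by (simp add: cs_neg add.commute)
    next
      case (H k) show ?thesis unfolding xH H br.simps using HH[of phi m k f] by simp
    next
      case (I k) show ?thesis unfolding xH I br.simps keysum_bvec by simp
    next
      case (J k) show ?thesis unfolding xH J br.simps keysum_bvec by simp
    qed
  next
    case xI: (I m) show ?thesis by (cases y) (simp_all add: xI keysum_bvec)
  next
    case xJ: (J m) show ?thesis by (cases y) (simp_all add: xJ keysum_bvec)
  qed
qed


lemma lin_bvec: "lin phi (bvec c b) = c * phi b"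
  unfolding lin_def bvec_def by (rule keysum_single[where h = "\<lambda>k c. c * phi k"]) simp

lemma phi_IJ:
  assumes "lie_hom_p phi"
  shows "phi (I n) = 0" "phi (J n) = 0"
proof -
  have "lin phi (br (H 0) (I n)) = 0" "lin phi (br (H 0) (J n)) = 0"
    using assms[unfolded lie_hom_p_def, rule_format, of "H 0" "I n"]
      assms[unfolded lie_hom_p_def, rule_format, of "H 0" "J n"] by simp_all
  then show "phi (I n) = 0" "phi (J n) = 0" by (simp_all add: lin_bvec)
qed

lemma X_nz: "X v \<noteq> 0"
  unfolding X_def by (metis lookup_single_eq lookup_zero one_neq_zero)

theorem theorem4p5:
  fixes phi :: "gb \<Rightarrow> complex"
  assumes "lie_hom_p phi"
    and "finite (S_phi phi)"
  shows "W_irreducible phi \<longleftrightarrow> card (S_phi phi) \<ge> 2"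
proof -
  note lie = assms(1) and fin = assms(2)
  have pI: "\<And>n. phi (I n) = 0" and pJ: "\<And>n. phi (J n) = 0" using phi_IJ[OF lie] by auto
  interpret r1: rep phi "rho phi" 1 by (rule model_rep[OF fin pI pJ]) simp
  have FF1e: "r1.FF (wd []) = 1" by simp
  have w0: "wd [] \<notin> Wker phi" using r1.Wker_FF FF1e by force
  show ?thesis
  proof
    assume irr: "W_irreducible phi"
    show "card (S_phi phi) \<ge> 2"
    proof (rule ccontr)
      assume nc: "\<not> 2 \<le> card (S_phi phi)"
      obtain k where Sk: "S_phi phi \<subseteq> {k}"
      proof (cases "S_phi phi = {}")
        case True then show ?thesis using that by blast
      next
        case False
        then obtain a where a: "a \<in> S_phi phi" by blast
        have "S_phi phi \<subseteq> {a}"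
        proof
          fix b assume b: "b \<in> S_phi phi"
          show "b \<in> {a}"
          proof (rule ccontr)
            assume "b \<notin> {a}"
            then have "card {a, b} = 2" by auto
            moreover have "card {a, b} \<le> card (S_phi phi)" using a b fin by (intro card_mono) auto
            ultimately show False using nc by simp
          qed
        qed
        then show ?thesis using that by blast
      qed
      define M where "M = {t. r1.FF t = 0}"
      have sub: "subspace_T M" unfolding M_def subspace_T_def by (auto simp: r1.FF_add r1.FF_smul)
      have WM: "Wker phi \<subseteq> M" unfolding M_def using r1.Wker_FF by blast
      have stab: "\<forall>g. \<forall>t\<in>M. act g t \<in> M" unfolding M_def by (simp add: r1.FF_act)
      have "M = Wker phi \<or> M = UNIV" using irr sub WM stab unfolding W_irreducible_def by blast
      moreover have "M \<noteq> UNIV"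
      proof
        assume "M = UNIV"
        then have "wd [] \<in> M" by simp
        then show False using FF1e unfolding M_def by simp
      qed
      moreover have "wd [L k] \<in> M"
      proof -
        have "ell phi k = 0" unfolding ell_def
          by (rule sum.neutral) (use Sk in auto)
        then show ?thesis unfolding M_def by simp
      qed
      moreover have "wd [L k] \<notin> Wker phi"
      proof
        assume "wd [L k] \<in> Wker phi"
        interpret r2: rep phi "rho phi" "X (Zv (k + 1))"
          by (rule model_rep[OF fin pI pJ]) (simp add: der_X Pv_def)
        have "ell phi k = 0" unfolding ell_def
          by (rule sum.neutral) (use Sk in auto)
        then have "r2.FF (wd [L k]) = - X (Zv 1)"
          by (simp add: der_X Dv_def cs_neg)
        moreover have "r2.FF (wd [L k]) = 0" using r2.Wker_FF \<open>wd [L k] \<in> Wker phi\<close> by blast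
        ultimately show False using X_nz by simp
      qed
      ultimately show False by blast
    qed
  next
    assume c2: "card (S_phi phi) \<ge> 2"
    show "W_irreducible phi" unfolding W_irreducible_def
    proof (intro conjI allI impI)
      show "Wker phi \<noteq> UNIV" using w0 by blast
      fix M assume M: "subspace_T M \<and> Wker phi \<subseteq> M \<and> (\<forall>g. \<forall>t\<in>M. act g t \<in> M)"
      then have "stable phi M" unfolding stable_def pre_def by blast
      then show "M = Wker phi \<or> M = UNIV" using irr_main[OF _ fin c2] by blast
    qed
  qed
qed


end
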